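(* Let $N\ge4$ and let $H=(f_1,\dots,f_{N-1},g)\colon\mathbb{H}^3\to\mathbb{H}^{2N-1}$ be a smooth CR map with $H(0)=0$ which is tangentially $(2,N-3)$-degenerate at the origin and satisfies the normalization conditions $H^{(1,0)}=e_1$, $H^{(0,1)}=e_N$, $H^{(2,0)}=2e_2$, $f_2^{(1,1)}=0$, $\operatorname{Re}(g^{(0,2)})=0$, $\operatorname{Re}(f_2^{(2,1)})=0$, $f_1^{(0,2)}\ge0$. Then for every $3\le k\le N-1$, $$\left(2z^2+w^2f_2^{(0,2)}\right)f_k(z,w)=w\left(2zf_k^{(1,1)}+wf_k^{(0,2)}\right)f_2(z,w).$$
   Context: $\mathbb{H}^{2n-1}=\{(z,w)\in\mathbb{C}^{n-1}\times\mathbb{C}:\operatorname{Im}w=\|z\|^2\}$; such CR maps are restrictions of rational holomorphic maps. $h^{(k,\ell)}=\partial^{k+\ell}h(0)/\partial z^k\partial w^\ell$; $e_j$ is the $j$-th standard unit vector in $\mathbb{C}^N$. Tangential degeneracy: with $f=(f_1,\dots,f_{N-1})$, $\bar f(\chi,\tau)=\overline{f(\bar\chi,\bar\tau)}$, $L=\partial_\chi-2iz\partial_\tau$ on $\mathcal M=\{w-\tau=2iz\chi\}$, $\tilde E_\ell(p,\bar q)=\operatorname{span}\{(L^k\bar f)(p,\bar q):k\le\ell\}\subset\mathbb{C}^{N-1}$, $\tilde E=\bigcup_\ell\tilde E_\ell$, $d(p,\bar q)=N-1-\dim\tilde E(p,\bar q)$, $S_q=\{w=\tau+2iz\chi\}$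 for $\bar q=(\chi,\tau)$, $\operatorname{tdeg}_H(q)=\max_{p\in S_q}d(p,\bar q)$; $H$ is tangentially $(k,\operatorname{tdeg}_H(q))$-degenerate at $q$ if $k$ is the smallest integer with $\tilde E_k(p,\bar q)=\tilde E(p,\bar q)$ for generic $p\in S_q$. *)

theory Defs
  imports "HOL-Analysis.Analysis" "HOL-Library.Function_Algebras"
begin

text \<open>Holomorphic on an open set U of C^2: continuous and holomorphic in each
  variable separately (equivalent to joint holomorphy by Osgood's lemma).\<close>
definition holo2 :: "(complex \<times> complex) set \<Rightarrow> (complex \<times> complex \<Rightarrow> complex) \<Rightarrow> bool" where
  "holo2 U F \<longleftrightarrow> open U \<and> continuous_on U F \<and>
     (\<forall>a b. (a, b) \<in> U \<longrightarrow>
        (\<lambda>x. F (x, b)) field_differentiable (at a) \<and>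
        (\<lambda>y. F (a, y)) field_differentiable (at b))"

definition dz :: "(complex \<times> complex \<Rightarrow> complex) \<Rightarrow> complex \<times> complex \<Rightarrow> complex" where
  "dz F = (\<lambda>(a, b). deriv (\<lambda>x. F (x, b)) a)"

definition dw :: "(complex \<times> complex \<Rightarrow> complex) \<Rightarrow> complex \<times> complex \<Rightarrow> complex" where
  "dw F = (\<lambda>(a, b). deriv (\<lambda>y. F (a, y)) b)"

text \<open>h^{(k,l)} = d^{k+l} h(0) / dz^k dw^l\<close>
definition pd :: "nat \<Rightarrow> nat \<Rightarrow> (complex \<times> complex \<Rightarrow> complex) \<Rightarrow> complex" where
  "pd k l F = (dz ^^ k) ((dw ^^ l) F) (0, 0)"

definition Heis3 :: "(complex \<times> complex) set" where
  "Heis3 = {(z, w). Im w = (cmod z)\<^sup>2}"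

definition inHeis :: "nat \<Rightarrow> (nat \<Rightarrow> complex) \<Rightarrow> complex \<Rightarrow> bool" where
  "inHeis N zz w \<longleftrightarrow> Im w = (\<Sum>j=1..N-1. (cmod (zz j))\<^sup>2)"

definition fbar :: "(complex \<times> complex \<Rightarrow> complex) \<Rightarrow> complex \<times> complex \<Rightarrow> complex" where
  "fbar F = (\<lambda>(c, t). cnj (F (cnj c, cnj t)))"

text \<open>The vector field L = d/dchi - 2 i z d/dtau, z being the first coordinate of p\<close>
definition Lop :: "complex \<Rightarrow> (complex \<times> complex \<Rightarrow> complex) \<Rightarrow> complex \<times> complex \<Rightarrow> complex" where
  "Lop z F = (\<lambda>x. dz F x - 2 * \<i> * z * dw F x)"

text \<open>Vectors of C^{N-1} are functions nat => complex supported in {1..N-1};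
  complex scalar multiplication.\<close>
definition cscale :: "complex \<Rightarrow> (nat \<Rightarrow> complex) \<Rightarrow> nat \<Rightarrow> complex" where
  "cscale c v = (\<lambda>i. c * v i)"

text \<open>(L^k bar f)(p, bar q) in C^{N-1}, for f = (f_1,...,f_{N-1}), p = (z,w), bar q = qb\<close>
definition Lvec :: "nat \<Rightarrow> (nat \<Rightarrow> complex \<times> complex \<Rightarrow> complex) \<Rightarrow> nat
                    \<Rightarrow> complex \<times> complex \<Rightarrow> complex \<times> complex \<Rightarrow> nat \<Rightarrow> complex" where
  "Lvec N f k p qb = (\<lambda>j. if 1 \<le> j \<and> j \<le> N - 1 then ((Lop (fst p) ^^ k) (fbar (f j))) qb else 0)"

definition Etl :: "nat \<Rightarrow> (nat \<Rightarrow> complex \<times> complex \<Rightarrow> complex) \<Rightarrow> nat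
                    \<Rightarrow> complex \<times> complex \<Rightarrow> complex \<times> complex \<Rightarrow> (nat \<Rightarrow> complex) set" where
  "Etl N f l p qb = module.span cscale {Lvec N f k p qb | k. k \<le> l}"

definition Et :: "nat \<Rightarrow> (nat \<Rightarrow> complex \<times> complex \<Rightarrow> complex)
                    \<Rightarrow> complex \<times> complex \<Rightarrow> complex \<times> complex \<Rightarrow> (nat \<Rightarrow> complex) set" where
  "Et N f p qb = module.span cscale {Lvec N f k p qb | k. True}"

definition dgen :: "nat \<Rightarrow> (nat \<Rightarrow> complex \<times> complex \<Rightarrow> complex)
                    \<Rightarrow> complex \<times> complex \<Rightarrow> complex \<times> complex \<Rightarrow> nat" where
  "dgen N f p qb = N - 1 - vector_space.dim cscale (Et N f p qb)"

definition qbar :: "complex \<times> complex \<Rightarrow> complex \<times> complex" where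
  "qbar q = (cnj (fst q), cnj (snd q))"

definition Sq :: "complex \<times> complex \<Rightarrow> (complex \<times> complex) set" where
  "Sq q = {(z, w). w = snd (qbar q) + 2 * \<i> * z * fst (qbar q)}"

definition tdeg :: "nat \<Rightarrow> (nat \<Rightarrow> complex \<times> complex \<Rightarrow> complex) \<Rightarrow> complex \<times> complex \<Rightarrow> nat" where
  "tdeg N f q = Max ((\<lambda>p. dgen N f p (qbar q)) ` Sq q)"

text \<open>A property holds for generic p in S_q if it holds on a (relatively) open dense
  subset of S_q; S_q is parametrized by its z-coordinate.\<close>
definition generic_on_Sq :: "complex \<times> complex \<Rightarrow> (complex \<times> complex \<Rightarrow> bool) \<Rightarrow> bool" where
  "generic_on_Sq q P \<longleftrightarrow> (\<exists>A. open A \<and> closure A = UNIV \<and>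
      (\<forall>z\<in>A. P (z, snd (qbar q) + 2 * \<i> * z * fst (qbar q))))"

definition tang_degenerate :: "nat \<Rightarrow> (nat \<Rightarrow> complex \<times> complex \<Rightarrow> complex)
                                \<Rightarrow> complex \<times> complex \<Rightarrow> nat \<Rightarrow> nat \<Rightarrow> bool" where
  "tang_degenerate N f q k d \<longleftrightarrow> d = tdeg N f q \<and>
     generic_on_Sq q (\<lambda>p. Etl N f k p (qbar q) = Et N f p (qbar q)) \<and>
     (\<forall>k'<k. \<not> generic_on_Sq q (\<lambda>p. Etl N f k' p (qbar q) = Et N f p (qbar q)))"

end

theory Submission
  imports Defs "HOL-Complex_Analysis.Complex_Analysis"
begin


lemma slice_open1: "open U \<Longrightarrow> open {x. (x, b) \<in> U}"
proof -
  assume "open U"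
  have "{x. (x, b) \<in> U} = (\<lambda>x. (x, b)) -` U" by auto
  moreover have "continuous_on UNIV (\<lambda>x::'a::topological_space. (x, b::'b::topological_space))"
    by (intro continuous_intros)
  ultimately show ?thesis using \<open>open U\<close> by (metis open_vimage)
qed

lemma slice_open2: "open U \<Longrightarrow> open {y. (a, y) \<in> U}"
proof -
  assume "open U"
  have "{y. (a, y) \<in> U} = (\<lambda>y. (a, y)) -` U" by auto
  moreover have "continuous_on UNIV (\<lambda>y::'b::topological_space. (a::'a::topological_space, y))"
    by (intro continuous_intros)
  ultimately show ?thesis using \<open>open U\<close> by (metis open_vimage)
qed

lemma holo2_slice1:
  assumes "holo2 U F" shows "(\<lambda>x. F (x, b)) holomorphic_on {x. (x, b) \<in> U}"
  using assms slice_open1[of U b]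
  by (auto simp: holo2_def holomorphic_on_open field_differentiable_def)

lemma holo2_slice2:
  assumes "holo2 U F" shows "(\<lambda>y. F (a, y)) holomorphic_on {y. (a, y) \<in> U}"
  using assms slice_open2[of U a]
  by (auto simp: holo2_def holomorphic_on_open field_differentiable_def)

lemma dz_app: "dz F (a, b) = deriv (\<lambda>x. F (x, b)) a" by (simp add: dz_def)
lemma dw_app: "dw F (a, b) = deriv (\<lambda>y. F (a, y)) b" by (simp add: dw_def)

lemma holo2_dz1:
  assumes "holo2 U F" "(a, b) \<in> U"
  shows "((\<lambda>x. F (x, b)) has_field_derivative dz F (a, b)) (at a)"
  using assms by (auto simp: holo2_def dz_app DERIV_deriv_iff_field_differentiable)

lemma holo2_dw1:
  assumes "holo2 U F" "(a, b) \<in> U"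
  shows "((\<lambda>y. F (a, y)) has_field_derivative dw F (a, b)) (at b)"
  using assms by (auto simp: holo2_def dw_app DERIV_deriv_iff_field_differentiable)

lemma holo2_dz_x:
  assumes "holo2 U F" "(a, b) \<in> U"
  shows "((\<lambda>x. dz F (x, b)) has_field_derivative (deriv ^^ 2) (\<lambda>x. F (x, b)) a) (at a)"
proof -
  have "(\<lambda>x. dz F (x, b)) = (deriv ^^ 1) (\<lambda>x. F (x, b))" by (simp add: dz_app fun_eq_iff)
  moreover have "((deriv ^^ 1) (\<lambda>x. F (x, b)) has_field_derivative (deriv ^^ Suc 1) (\<lambda>x. F (x, b)) a) (at a)"
    by (rule has_field_derivative_higher_deriv[OF holo2_slice1[OF assms(1)]])
       (use assms slice_open1[of U b] in \<open>auto simp: holo2_def\<close>)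
  ultimately show ?thesis by (simp add: numeral_2_eq_2)
qed

lemma core:
  assumes H: "holo2 U F" and ab: "(a, b) \<in> U"
  shows "isCont (dz F) (a, b) \<and> (\<exists>d. ((\<lambda>y. dz F (a, y)) has_field_derivative d) (at b) \<and>
            ((\<lambda>h. (dw F (a + h, b) - dw F (a, b)) / h) \<longlongrightarrow> d) (at 0))"
proof -
  have oU: "open U" and cF: "continuous_on U F" using H by (auto simp: holo2_def)
  obtain e where e: "e > 0" "ball (a, b) e \<subseteq> U" using oU ab open_contains_ball by blast
  define r where "r = e / 5"
  have r: "r > 0" using e by (simp add: r_def)
  have box: "(x, y) \<in> U" if "dist x a \<le> 2 * r" "dist y b \<le> 2 * r" for x y
  proof -
    have "dist (x, y) (a, b) = sqrt ((dist x a)\<^sup>2 + (dist y b)\<^sup>2)" by (simp add: dist_Pair_Pair)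
    also have "\<dots> \<le> dist x a + dist y b" by (rule sqrt_sum_squares_le_sum) auto
    also have "\<dots> < e" using that r e by (simp add: r_def)
    finally show ?thesis using e by (auto simp: dist_commute subset_iff)
  qed
  define K where "K = cball a (2 * r) \<times> cball b (2 * r)"
  have KU: "K \<subseteq> U" using box by (auto simp: K_def dist_commute)
  have "compact (F ` K)" unfolding K_def
    by (rule compact_continuous_image) (use continuous_on_subset[OF cF KU] in \<open>auto simp: K_def compact_Times\<close>)
  then obtain M where M: "\<And>p. p \<in> K \<Longrightarrow> norm (F p) \<le> M"
    using compact_imp_bounded bounded_iff by (metis image_eqI)
  have M0: "M \<ge> 0" using M[of "(a, b)"] r by (auto simp: K_def intro: order_trans[OF norm_ge_zero])
  define C where "C = 2 * M / r^2"
  have C0: "C \<ge> 0" using M0 by (simp add: C_def)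
  have cauchy: "norm ((deriv ^^ 2) (\<lambda>x. F (x, y)) x) \<le> C"
    if x: "dist x a \<le> r" and y: "dist y b \<le> 2 * r" for x y
  proof -
    have sub: "cball x r \<subseteq> {x. (x, y) \<in> U}"
    proof
      fix t assume "t \<in> cball x r"
      then have "dist t a \<le> 2 * r" using x dist_triangle[of t a x] by (auto simp: dist_commute)
      then show "t \<in> {x. (x, y) \<in> U}" using box y by auto
    qed
    have "norm ((deriv ^^ 2) (\<lambda>x. F (x, y)) x) \<le> fact 2 * M / r ^ 2"
    proof (rule Cauchy_inequality)
      show "(\<lambda>x. F (x, y)) holomorphic_on ball x r"
        using holomorphic_on_subset[OF holo2_slice1[OF H, of y]] sub ball_subset_cball by blast
      show "continuous_on (cball x r) (\<lambda>x. F (x, y))"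
        using continuous_on_subset[OF holomorphic_on_imp_continuous_on[OF holo2_slice1[OF H]] sub] .
      show "0 < r" by (rule r)
      fix t assume "norm (x - t) = r"
      then have "dist t a \<le> 2 * r" using x dist_triangle[of t a x] by (auto simp: dist_commute dist_norm norm_minus_commute)
      then show "norm (F (t, y)) \<le> M" using M[of "(t, y)"] y by (auto simp: K_def dist_commute)
    qed
    then show ?thesis by (simp add: C_def)
  qed
  have stepA: "norm (dz F (x, y) - dz F (a, y)) \<le> C * norm (x - a)"
    if x: "dist x a \<le> r" and y: "dist y b \<le> 2 * r" for x y
  proof (rule field_differentiable_bound[of "cball a r"])
    show "convex (cball a r)" by simp
    fix t assume t: "t \<in> cball a r"
    then have tU: "(t, y) \<in> U" using box y r by (auto simp: dist_commute)
    show "((\<lambda>x. dz F (x, y)) has_field_derivative (deriv ^^ 2) (\<lambda>x. F (x, y)) t) (at t within cball a r)"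
      using holo2_dz_x[OF H tU] by (rule has_field_derivative_at_within)
    show "norm ((deriv ^^ 2) (\<lambda>x. F (x, y)) t) \<le> C" using cauchy[of t y] t y by (auto simp: dist_commute)
  next
    show "x \<in> cball a r" using x by (auto simp: dist_commute)
    show "a \<in> cball a r" using r by auto
  qed
  have stepB: "norm (F (a + h, y) - F (a, y) - h * dz F (a, y)) \<le> C * norm h * norm h"
    if h: "norm h \<le> r" and y: "dist y b \<le> 2 * r" for h y
  proof -
    have "norm ((\<lambda>x. F (x, y) - x * dz F (a, y)) (a + h) - (\<lambda>x. F (x, y) - x * dz F (a, y)) a)
          \<le> (C * norm h) * norm ((a + h) - a)"
    proof (rule field_differentiable_bound[of "cball a (norm h)"])
      show "convex (cball a (norm h))" by simp
      fix t assume t: "t \<in> cball a (norm h)"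
      then have td: "dist t a \<le> r" using h by (auto simp: dist_commute)
      then have tU: "(t, y) \<in> U" using box y r by auto
      show "((\<lambda>x. F (x, y) - x * dz F (a, y)) has_field_derivative (dz F (t, y) - dz F (a, y))) (at t within cball a (norm h))"
        by (rule has_field_derivative_at_within)
           (use holo2_dz1[OF H tU] in \<open>auto intro!: derivative_eq_intros\<close>)
      have "norm (dz F (t, y) - dz F (a, y)) \<le> C * norm (t - a)" by (rule stepA[OF td y])
      also have "\<dots> \<le> C * norm h" using t C0 by (intro mult_left_mono) (auto simp: dist_norm norm_minus_commute)
      finally show "norm (dz F (t, y) - dz F (a, y)) \<le> C * norm h" .
    next
      show "a + h \<in> cball a (norm h)" by (simp add: dist_norm)
      show "a \<in> cball a (norm h)" by simp
    qed
    then show ?thesis by (simp add: algebra_simps)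
  qed
  define q where "q = (\<lambda>h y. (F (a + h, y) - F (a, y)) / h)"
  have unif: "uniform_limit (cball b r) q (\<lambda>y. dz F (a, y)) (at 0)"
    unfolding uniform_limit_iff
  proof (intro allI impI)
    fix \<epsilon> :: real assume \<epsilon>: "\<epsilon> > 0"
    define \<delta> where "\<delta> = min r (\<epsilon> / (C + 1))"
    have \<delta>: "\<delta> > 0" using r \<epsilon> C0 by (simp add: \<delta>_def)
    show "\<forall>\<^sub>F h in at 0. \<forall>y\<in>cball b r. dist (q h y) (dz F (a, y)) < \<epsilon>"
      unfolding eventually_at
    proof (intro exI[of _ \<delta>] conjI allI impI ballI)
      show "\<delta> > 0" by (rule \<delta>)
      fix h :: complex and y assume "h \<in> UNIV" and hh: "h \<noteq> 0 \<and> dist h 0 < \<delta>" and y: "y \<in> cball b r"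
      have hn: "h \<noteq> 0" "norm h < \<delta>" using hh by auto
      have "dist (q h y) (dz F (a, y)) = norm ((F (a + h, y) - F (a, y) - h * dz F (a, y)) / h)"
        using hn by (simp add: q_def dist_norm field_simps)
      also have "\<dots> = norm (F (a + h, y) - F (a, y) - h * dz F (a, y)) / norm h"
        by (simp add: norm_divide)
      also have "\<dots> \<le> C * norm h * norm h / norm h"
        by (intro divide_right_mono stepB) (use hn y r in \<open>auto simp: \<delta>_def dist_commute\<close>)
      also have "\<dots> = C * norm h" using hn by simp
      also have "\<dots> \<le> C * (\<epsilon> / (C + 1))" using hn C0 by (intro mult_left_mono) (auto simp: \<delta>_def)
      also have "\<dots> < \<epsilon>" using C0 \<epsilon> by (simp add: field_simps)
      finally show "dist (q h y) (dz F (a, y)) < \<epsilon>" .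
    qed
  qed
  have ev: "\<forall>\<^sub>F h in at 0. continuous_on (cball b r) (q h) \<and>
      (\<forall>w\<in>ball b r. (q h has_field_derivative ((dw F (a + h, w) - dw F (a, w)) / h)) (at w))"
    unfolding eventually_at
  proof (intro exI[of _ r] conjI allI impI ballI)
    show "r > 0" by (rule r)
    fix h :: complex assume "h \<in> UNIV" and hh: "h \<noteq> 0 \<and> dist h 0 < r"
    have inU: "(a + h, w) \<in> U" "(a, w) \<in> U" if "dist w b \<le> 2 * r" for w
      using box that hh r by (auto simp: dist_norm)
    have sub1: "cball b r \<subseteq> {y. (a + h, y) \<in> U}" and sub2: "cball b r \<subseteq> {y. (a, y) \<in> U}"
      using inU r by (auto simp: dist_commute)
    show "continuous_on (cball b r) (q h)" unfolding q_def
      by (intro continuous_intros continuous_on_subset[OF holomorphic_on_imp_continuous_on[OF holo2_slice2[OF H]] sub1]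
            continuous_on_subset[OF holomorphic_on_imp_continuous_on[OF holo2_slice2[OF H]] sub2])
         (use hh in auto)
    fix w assume w: "w \<in> ball b r"
    then have wd: "dist w b \<le> 2 * r" using r by (auto simp: dist_commute)
    show "(q h has_field_derivative ((dw F (a + h, w) - dw F (a, w)) / h)) (at w)"
      unfolding q_def
      by (intro DERIV_cdivide DERIV_diff holo2_dw1[OF H inU(1)[OF wd]] holo2_dw1[OF H inU(2)[OF wd]])
  qed
  obtain g' where g': "continuous_on (cball b r) (\<lambda>y. dz F (a, y))"
    "\<And>w. w \<in> ball b r \<Longrightarrow> ((\<lambda>y. dz F (a, y)) has_field_derivative g' w) (at w) \<and>
        ((\<lambda>h. (dw F (a + h, w) - dw F (a, w)) / h) \<longlongrightarrow> g' w) (at 0)"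
    by (rule has_complex_derivative_uniform_limit[OF ev unif]) (use r in auto)
  have gb: "((\<lambda>y. dz F (a, y)) has_field_derivative g' b) (at b)"
    "((\<lambda>h. (dw F (a + h, b) - dw F (a, b)) / h) \<longlongrightarrow> g' b) (at 0)"
    using g'(2)[of b] r by auto
  have ic: "isCont (\<lambda>y. dz F (a, y)) b" using gb(1) by (rule DERIV_isCont)
  have T1: "((\<lambda>p. dz F p - dz F (a, snd p)) \<longlongrightarrow> 0) (at (a, b))"
  proof (rule Lim_null_comparison)
    show "\<forall>\<^sub>F p in at (a, b). norm (dz F p - dz F (a, snd p)) \<le> C * norm (fst p - a)"
      unfolding eventually_at
    proof (intro exI[of _ r] conjI ballI impI)
      show "r > 0" by (rule r)
      fix p :: "complex \<times> complex" assume "p \<in> UNIV" and "p \<noteq> (a, b) \<and> dist p (a, b) < r"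
      then have d: "dist (fst p) a \<le> r" "dist (snd p) b \<le> 2 * r"
        using dist_fst_le[of p "(a,b)"] dist_snd_le[of p "(a,b)"] r by auto
      show "norm (dz F p - dz F (a, snd p)) \<le> C * norm (fst p - a)"
        using stepA[OF d] by (cases p) auto
    qed
    have "((\<lambda>p. C * norm (fst p - a)) \<longlongrightarrow> C * norm (fst (a, b) - a)) (at (a, b))"
      by (intro tendsto_intros)
    then show "((\<lambda>p. C * norm (fst p - a)) \<longlongrightarrow> 0) (at (a, b))" by simp
  qed
  have T2: "((\<lambda>p. dz F (a, snd p)) \<longlongrightarrow> dz F (a, b)) (at (a, b))"
  proof -
    have "(snd \<longlongrightarrow> snd (a, b)) (at (a, b))" by (intro tendsto_intros)
    then show ?thesis using isCont_tendsto_compose[OF ic, of snd] by simp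
  qed
  have "((\<lambda>p. (dz F p - dz F (a, snd p)) + dz F (a, snd p)) \<longlongrightarrow> 0 + dz F (a, b)) (at (a, b))"
    by (rule tendsto_add[OF T1 T2])
  then have "(dz F \<longlongrightarrow> dz F (a, b)) (at (a, b))" by simp
  then have "isCont (dz F) (a, b)" by (simp add: isCont_def)
  then show ?thesis using gb by blast
qed


definition swf :: "(complex \<times> complex \<Rightarrow> complex) \<Rightarrow> complex \<times> complex \<Rightarrow> complex" where
  "swf F = (\<lambda>p. F (snd p, fst p))"
definition swU :: "(complex \<times> complex) set \<Rightarrow> (complex \<times> complex) set" where
  "swU U = {p. (snd p, fst p) \<in> U}"

lemma swf_swf[simp]: "swf (swf F) = F" by (simp add: swf_def)
lemma swU_swU[simp]: "swU (swU U) = U" by (auto simp: swU_def)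

lemma holo2_swap:
  assumes "holo2 U F" shows "holo2 (swU U) (swf F)"
proof -
  have oU: "open U" and cF: "continuous_on U F" using assms by (auto simp: holo2_def)
  have "swU U = (\<lambda>p. (snd p, fst p)) -` U" by (auto simp: swU_def)
  moreover have "continuous_on UNIV (\<lambda>p::complex \<times> complex. (snd p, fst p))" by (intro continuous_intros)
  ultimately have o: "open (swU U)" using oU by (metis open_vimage)
  have c: "continuous_on (swU U) (swf F)" unfolding swf_def
    by (rule continuous_on_compose2[OF cF]) (auto intro!: continuous_intros simp: swU_def)
  show ?thesis using assms o c by (auto simp: holo2_def swf_def swU_def)
qed

lemma dz_swf: "dz (swf F) (a, b) = dw F (b, a)" by (simp add: dz_def dw_def swf_def)
lemma dw_swf: "dw (swf F) (a, b) = dz F (b, a)" by (simp add: dz_def dw_def swf_def)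
lemma dw_eq_swf: "dw F = swf (dz (swf F))" by (simp add: fun_eq_iff swf_def dz_def dw_def)

lemma holo2_dz:
  assumes H: "holo2 U F" shows "holo2 U (dz F)"
proof -
  have oU: "open U" using H by (auto simp: holo2_def)
  have "continuous_on U (dz F)"
    by (rule continuous_at_imp_continuous_on) (use core[OF H] in auto)
  moreover have "(\<lambda>x. dz F (x, b)) field_differentiable (at a)" if "(a, b) \<in> U" for a b
    using holo2_dz_x[OF H that] field_differentiable_def by blast
  moreover have "(\<lambda>y. dz F (a, y)) field_differentiable (at b)" if "(a, b) \<in> U" for a b
    using core[OF H that] field_differentiable_def by blast
  ultimately show ?thesis using oU by (auto simp: holo2_def)
qed

lemma holo2_dw:
  assumes H: "holo2 U F" shows "holo2 U (dw F)"
  using holo2_swap[OF holo2_dz[OF holo2_swap[OF H]]] by (simp add: dw_eq_swf[symmetric])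

lemma dzdw_sym:
  assumes H: "holo2 U F" and ab: "(a, b) \<in> U"
  shows "dw (dz F) (a, b) = dz (dw F) (a, b)"
proof -
  obtain d where d: "((\<lambda>y. dz F (a, y)) has_field_derivative d) (at b)"
     "((\<lambda>h. (dw F (a + h, b) - dw F (a, b)) / h) \<longlongrightarrow> d) (at 0)"
    using core[OF H ab] by blast
  have "dw (dz F) (a, b) = d" using d(1) by (simp add: dw_app DERIV_imp_deriv)
  moreover have D: "((\<lambda>x. dw F (x, b)) has_field_derivative dz (dw F) (a, b)) (at a)"
    by (rule holo2_dz1[OF holo2_dw[OF H] ab])
  have "((\<lambda>h. (dw F (a + h, b) - dw F (a, b)) / h) \<longlongrightarrow> dz (dw F) (a, b)) (at 0)"
    using D by (simp add: DERIV_def)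
  then have "dz (dw F) (a, b) = d" using d(2) tendsto_unique[OF trivial_limit_at] by blast
  ultimately show ?thesis by simp
qed

lemma holo2_frechet:
  assumes H: "holo2 U F" and ab: "(a, b) \<in> U"
  shows "(F has_derivative (\<lambda>(h, k). dz F (a, b) * h + dw F (a, b) * k)) (at (a, b))"
proof -
  have oU: "open U" using H by (auto simp: holo2_def)
  obtain e where e: "e > 0" "ball (a, b) e \<subseteq> U" using oU ab open_contains_ball by blast
  define X where "X = ball a (e / 2)"
  define Y where "Y = ball b (e / 2)"
  have XY: "X \<times> Y \<subseteq> U"
  proof safe
    fix x y assume "x \<in> X" "y \<in> Y"
    then have "dist x a < e/2" "dist y b < e/2" by (auto simp: X_def Y_def dist_commute)
    then have "dist (x, y) (a, b) < e"
      using sqrt_sum_squares_le_sum[of "dist x a" "dist y b"] by (simp add: dist_Pair_Pair)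
    then show "(x, y) \<in> U" using e by (auto simp: dist_commute subset_iff)
  qed
  have oXY: "open (X \<times> Y)" by (simp add: X_def Y_def open_Times)
  have abXY: "(a, b) \<in> X \<times> Y" using e by (simp add: X_def Y_def)
  have cdw: "continuous_on U (dw F)" using holo2_dw[OF H] by (simp add: holo2_def)
  have "((\<lambda>(x, y). F (x, y)) has_derivative (\<lambda>(tx, ty). dz F (a, b) * tx + blinfun_apply (blinfun_mult_right (dw F (a, b))) ty)) (at (a, b) within X \<times> Y)"
  proof (rule has_derivative_partialsI)
    show "((\<lambda>x. F (x, b)) has_derivative (*) (dz F (a, b))) (at a within X)"
      using holo2_dz1[OF H ab] by (simp add: has_field_derivative_def has_derivative_at_withinI)
    fix x y assume "x \<in> X" "y \<in> Y"
    then have "(x, y) \<in> U" using XY by auto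
    then show "((\<lambda>y. F (x, y)) has_derivative blinfun_apply (blinfun_mult_right (dw F (x, y)))) (at y within Y)"
      using holo2_dw1[OF H] by (simp add: has_field_derivative_def has_derivative_at_withinI)
  next
    have "isCont (dw F) (a, b)" using cdw oU ab continuous_on_eq_continuous_at by blast
    then have "isCont (\<lambda>p. blinfun_mult_right (dw F p)) (a, b)"
      by (rule bounded_linear.continuous[OF bounded_linear_blinfun_mult_right])
    then have "continuous (at (a, b) within X \<times> Y) (\<lambda>p. blinfun_mult_right (dw F p))"
      by (rule continuous_at_imp_continuous_within)
    moreover have "(\<lambda>p. blinfun_mult_right (dw F p)) = (\<lambda>(x, y). blinfun_mult_right (dw F (x, y)))"
      by auto
    ultimately show "continuous (at (a, b) within X \<times> Y) (\<lambda>(x, y). blinfun_mult_right (dw F (x, y)))"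
      by simp
    show "b \<in> Y" "convex Y" using e by (auto simp: Y_def)
  qed
  moreover have "(\<lambda>(x, y). F (x, y)) = F" by auto
  moreover have "(\<lambda>(tx, ty). dz F (a, b) * tx + blinfun_apply (blinfun_mult_right (dw F (a, b))) ty)
     = (\<lambda>(h, k). dz F (a, b) * h + dw F (a, b) * k)" by auto
  moreover have "at (a, b) within X \<times> Y = at (a, b)" by (rule at_within_open[OF abXY oXY])
  ultimately show ?thesis by simp
qed

lemma holo2_line:
  assumes H: "holo2 U F" and tU: "(t, c * t) \<in> U"
  shows "((\<lambda>t. F (t, c * t)) has_field_derivative (dz F (t, c * t) + c * dw F (t, c * t))) (at t)"
proof -
  have d1: "((\<lambda>t. (t, c * t)) has_derivative (\<lambda>h. (h, c * h))) (at t)"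
    by (intro derivative_eq_intros) auto
  have "((F \<circ> (\<lambda>t. (t, c * t))) has_derivative
      ((\<lambda>(h, k). dz F (t, c * t) * h + dw F (t, c * t) * k) \<circ> (\<lambda>h. (h, c * h)))) (at t)"
    by (rule diff_chain_at[OF d1 holo2_frechet[OF H tU]])
  moreover have "(F \<circ> (\<lambda>t. (t, c * t))) = (\<lambda>t. F (t, c * t))" by (simp add: o_def)
  moreover have "((\<lambda>(h, k). dz F (t, c * t) * h + dw F (t, c * t) * k) \<circ> (\<lambda>h. (h, c * h)))
     = (*) (dz F (t, c * t) + c * dw F (t, c * t))" by (auto simp: fun_eq_iff algebra_simps)
  ultimately show ?thesis by (simp only: has_field_derivative_def)
qed



lemma holo2_lin:
  assumes "holo2 U F" "holo2 U G" shows "holo2 U (\<lambda>p. F p + c * G p)"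
  using assms unfolding holo2_def
  by (auto intro!: continuous_intros field_differentiable_add field_differentiable_mult field_differentiable_const)

definition Dz :: "complex \<Rightarrow> (complex \<times> complex \<Rightarrow> complex) \<Rightarrow> complex \<times> complex \<Rightarrow> complex" where
  "Dz c F = (\<lambda>p. dz F p + c * dw F p)"

lemma holo2_Dz: "holo2 U F \<Longrightarrow> holo2 U (Dz c F)"
  unfolding Dz_def by (intro holo2_lin holo2_dz holo2_dw)

lemma holo2_Dz_pow: "holo2 U F \<Longrightarrow> holo2 U ((Dz c ^^ n) F)"
  by (induction n) (auto intro: holo2_Dz)

lemma line_higher:
  assumes H: "holo2 U F" and t: "(t, c * t) \<in> U"
  shows "(deriv ^^ n) (\<lambda>t. F (t, c * t)) t = (Dz c ^^ n) F (t, c * t)"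
  using t
proof (induction n arbitrary: t)
  case 0 then show ?case by simp
next
  case (Suc n)
  have oU: "open U" using H by (simp add: holo2_def)
  have oT: "open {t. (t, c * t) \<in> U}"
  proof -
    have "{t. (t, c * t) \<in> U} = (\<lambda>t. (t, c * t)) -` U" by auto
    moreover have "continuous_on UNIV (\<lambda>t::complex. (t, c * t))" by (intro continuous_intros)
    ultimately show ?thesis using oU by (metis open_vimage)
  qed
  have "\<forall>\<^sub>F s in nhds t. s \<in> {t. (t, c * t) \<in> U}"
    by (rule eventually_nhds_in_open[OF oT]) (use Suc.prems in simp)
  then have ev: "\<forall>\<^sub>F s in nhds t. (deriv ^^ n) (\<lambda>t. F (t, c * t)) s = (Dz c ^^ n) F (s, c * s)"
    by (rule eventually_mono) (use Suc.IH in simp)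
  have "(deriv ^^ Suc n) (\<lambda>t. F (t, c * t)) t = deriv ((deriv ^^ n) (\<lambda>t. F (t, c * t))) t" by simp
  also have "\<dots> = deriv (\<lambda>s. (Dz c ^^ n) F (s, c * s)) t" by (rule deriv_cong_ev[OF ev refl])
  also have "\<dots> = Dz c ((Dz c ^^ n) F) (t, c * t)"
    using holo2_line[OF holo2_Dz_pow[OF H] Suc.prems, of n] by (simp add: DERIV_imp_deriv Dz_def)
  finally show ?case by simp
qed

lemma line_holo:
  assumes H: "holo2 U F"
  shows "(\<lambda>t. F (t, c * t)) holomorphic_on {t. (t, c * t) \<in> U}"
proof -
  have oU: "open U" using H by (simp add: holo2_def)
  have oT: "open {t. (t, c * t) \<in> U}"
  proof -
    have "{t. (t, c * t) \<in> U} = (\<lambda>t. (t, c * t)) -` U" by auto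
    moreover have "continuous_on UNIV (\<lambda>t::complex. (t, c * t))" by (intro continuous_intros)
    ultimately show ?thesis using oU by (metis open_vimage)
  qed
  show ?thesis using oT holo2_line[OF H] by (auto simp: holomorphic_on_open)
qed

lemma local_dzdw:
  assumes "open V" "p \<in> V" "\<And>q. q \<in> V \<Longrightarrow> G1 q = G2 q"
  shows "dz G1 p = dz G2 p \<and> dw G1 p = dw G2 p"
proof -
  obtain a b where p: "p = (a, b)" by (cases p)
  have e1: "\<forall>\<^sub>F x in nhds a. G1 (x, b) = G2 (x, b)"
    using eventually_nhds_in_open[OF slice_open1[OF assms(1)], of a b] assms p
    by (auto elim!: eventually_mono)
  have e2: "\<forall>\<^sub>F y in nhds b. G1 (a, y) = G2 (a, y)"
    using eventually_nhds_in_open[OF slice_open2[OF assms(1)], of b a] assms p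
    by (auto elim!: eventually_mono)
  show ?thesis using deriv_cong_ev[OF e1 refl] deriv_cong_ev[OF e2 refl] p
    by (simp add: dz_app dw_app)
qed

lemma dz_fbar:
  assumes H: "holo2 U F" and cU: "(cnj c, cnj t) \<in> U"
  shows "dz (fbar F) (c, t) = cnj (dz F (cnj c, cnj t))"
proof -
  have "((cnj \<circ> (\<lambda>x. F (x, cnj t)) \<circ> cnj) has_field_derivative cnj (dz F (cnj c, cnj t))) (at c)"
    by (rule has_field_derivative_cnj_cnj) (use holo2_dz1[OF H cU] in simp)
  then have "((\<lambda>x. fbar F (x, t)) has_field_derivative cnj (dz F (cnj c, cnj t))) (at c)"
    by (simp add: fbar_def o_def)
  then show ?thesis by (simp add: dz_app DERIV_imp_deriv)
qed

lemma dw_fbar: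
  assumes H: "holo2 U F" and cU: "(cnj c, cnj t) \<in> U"
  shows "dw (fbar F) (c, t) = cnj (dw F (cnj c, cnj t))"
proof -
  have "((cnj \<circ> (\<lambda>y. F (cnj c, y)) \<circ> cnj) has_field_derivative cnj (dw F (cnj c, cnj t))) (at t)"
    by (rule has_field_derivative_cnj_cnj) (use holo2_dw1[OF H cU] in simp)
  then have "((\<lambda>y. fbar F (c, y)) has_field_derivative cnj (dw F (cnj c, cnj t))) (at t)"
    by (simp add: fbar_def o_def)
  then show ?thesis by (simp add: dw_app DERIV_imp_deriv)
qed

definition cV :: "(complex \<times> complex) set \<Rightarrow> (complex \<times> complex) set" where
  "cV U = {p. (cnj (fst p), cnj (snd p)) \<in> U}"

lemma open_cV: "open U \<Longrightarrow> open (cV U)"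
proof -
  assume oU: "open U"
  have "cV U = (\<lambda>p. (cnj (fst p), cnj (snd p))) -` U" by (auto simp: cV_def)
  moreover have "continuous_on UNIV (\<lambda>p::complex \<times> complex. (cnj (fst p), cnj (snd p)))"
    by (intro continuous_intros)
  ultimately show ?thesis using oU by (metis open_vimage)
qed

lemma Lop_fbar:
  assumes H: "holo2 U F" and p: "p \<in> cV U"
  shows "Lop z (fbar F) p = fbar (Dz (cnj (-2 * \<i> * z)) F) p"
proof -
  obtain c t where pc: "p = (c, t)" by (cases p)
  have cU: "(cnj c, cnj t) \<in> U" using p pc by (simp add: cV_def)
  show ?thesis using dz_fbar[OF H cU] dw_fbar[OF H cU] pc
    by (simp add: Lop_def fbar_def Dz_def)
qed

lemma Lop_pow_fbar:
  assumes H: "holo2 U F"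
  shows "p \<in> cV U \<Longrightarrow> (Lop z ^^ k) (fbar F) p = fbar ((Dz (cnj (-2 * \<i> * z)) ^^ k) F) p"
proof (induction k arbitrary: p)
  case 0 then show ?case by simp
next
  case (Suc k)
  have oV: "open (cV U)" using H open_cV by (simp add: holo2_def)
  have loc: "dz ((Lop z ^^ k) (fbar F)) p = dz (fbar ((Dz (cnj (-2 * \<i> * z)) ^^ k) F)) p \<and>
             dw ((Lop z ^^ k) (fbar F)) p = dw (fbar ((Dz (cnj (-2 * \<i> * z)) ^^ k) F)) p"
    by (rule local_dzdw[OF oV Suc.prems]) (rule Suc.IH)
  have "(Lop z ^^ Suc k) (fbar F) p = Lop z ((Lop z ^^ k) (fbar F)) p" by simp
  also have "\<dots> = Lop z (fbar ((Dz (cnj (-2 * \<i> * z)) ^^ k) F)) p"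
    using loc by (simp add: Lop_def)
  also have "\<dots> = fbar (Dz (cnj (-2 * \<i> * z)) ((Dz (cnj (-2 * \<i> * z)) ^^ k) F)) p"
    by (rule Lop_fbar[OF holo2_Dz_pow[OF H] Suc.prems])
  finally show ?case by simp
qed

lemma dz_lin:
  assumes "holo2 U G1" "holo2 U G2" "(a, b) \<in> U"
  shows "dz (\<lambda>p. G1 p + c * G2 p) (a, b) = dz G1 (a, b) + c * dz G2 (a, b)"
proof -
  have "((\<lambda>x. G1 (x, b) + c * G2 (x, b)) has_field_derivative dz G1 (a, b) + c * dz G2 (a, b)) (at a)"
    by (intro DERIV_add DERIV_cmult holo2_dz1[OF assms(1,3)] holo2_dz1[OF assms(2,3)])
  then show ?thesis by (simp add: dz_app DERIV_imp_deriv)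
qed

lemma dw_lin:
  assumes "holo2 U G1" "holo2 U G2" "(a, b) \<in> U"
  shows "dw (\<lambda>p. G1 p + c * G2 p) (a, b) = dw G1 (a, b) + c * dw G2 (a, b)"
proof -
  have "((\<lambda>y. G1 (a, y) + c * G2 (a, y)) has_field_derivative dw G1 (a, b) + c * dw G2 (a, b)) (at b)"
    by (intro DERIV_add DERIV_cmult holo2_dw1[OF assms(1,3)] holo2_dw1[OF assms(2,3)])
  then show ?thesis by (simp add: dw_app DERIV_imp_deriv)
qed

lemma Dz2:
  assumes H: "holo2 U F" and ab: "(a, b) \<in> U"
  shows "(Dz c ^^ 2) F (a, b) = dz (dz F) (a, b) + 2 * c * dz (dw F) (a, b) + c^2 * dw (dw F) (a, b)"
proof -
  have "(Dz c ^^ 2) F (a, b) = Dz c (Dz c F) (a, b)" by (simp add: numeral_2_eq_2)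
  also have "\<dots> = dz (\<lambda>p. dz F p + c * dw F p) (a, b) + c * dw (\<lambda>p. dz F p + c * dw F p) (a, b)"
    by (simp add: Dz_def)
  also have "\<dots> = (dz (dz F) (a, b) + c * dz (dw F) (a, b)) + c * (dw (dz F) (a, b) + c * dw (dw F) (a, b))"
    using dz_lin[OF holo2_dz[OF H] holo2_dw[OF H] ab] dw_lin[OF holo2_dz[OF H] holo2_dw[OF H] ab] by simp
  also have "\<dots> = dz (dz F) (a, b) + 2 * c * dz (dw F) (a, b) + c^2 * dw (dw F) (a, b)"
    using dzdw_sym[OF H ab] by (simp add: algebra_simps power2_eq_square)
  finally show ?thesis .
qed



lemma module_cscale: "module cscale"
  by unfold_locales (auto simp: cscale_def fun_eq_iff algebra_simps plus_fun_def)

lemma Lvec_comp: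
  assumes H: "holo2 U (f j)" and U0: "(0, 0) \<in> U" and j: "1 \<le> j" "j \<le> N - 1"
  shows "Lvec N f m (z, w) (0, 0) j = cnj ((Dz (cnj (-2 * \<i> * z)) ^^ m) (f j) (0, 0))"
proof -
  have "(0, 0) \<in> cV U" using U0 by (simp add: cV_def)
  then show ?thesis using Lop_pow_fbar[OF H, where p="(0,0)" and z=z and k=m] j by (simp add: Lvec_def fbar_def)
qed

lemma span3:
  assumes "v \<in> module.span cscale {Lvec N f k' p qb | k'. k' \<le> 2}"
  shows "\<exists>a0 a1 a2. \<forall>j. v j = a0 * Lvec N f 0 p qb j + a1 * Lvec N f 1 p qb j + a2 * Lvec N f 2 p qb j"
proof -
  interpret m: module cscale by (rule module_cscale)
  have set: "{Lvec N f k' p qb | k'. k' \<le> 2} = insert (Lvec N f 0 p qb) (insert (Lvec N f 1 p qb) (insert (Lvec N f 2 p qb) {}))"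
  proof (rule set_eqI, rule iffI)
    fix x assume "x \<in> {Lvec N f k' p qb | k'. k' \<le> 2}"
    then obtain k' where kk: "x = Lvec N f k' p qb" "k' \<le> 2" by blast
    then have "k' = 0 \<or> k' = 1 \<or> k' = 2" by auto
    then show "x \<in> insert (Lvec N f 0 p qb) (insert (Lvec N f 1 p qb) (insert (Lvec N f 2 p qb) {}))"
      using kk by auto
  next
    fix x assume "x \<in> insert (Lvec N f 0 p qb) (insert (Lvec N f 1 p qb) (insert (Lvec N f 2 p qb) {}))"
    then show "x \<in> {Lvec N f k' p qb | k'. k' \<le> 2}" by force
  qed
  from assms[unfolded set m.span_insert] obtain a0 a1 a2 where
    "v - cscale a0 (Lvec N f 0 p qb) - cscale a1 (Lvec N f 1 p qb) - cscale a2 (Lvec N f 2 p qb) \<in> {0}"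
    by auto
  then have "\<forall>j. v j = a0 * Lvec N f 0 p qb j + a1 * Lvec N f 1 p qb j + a2 * Lvec N f 2 p qb j"
    by (auto simp: fun_eq_iff cscale_def algebra_simps)
  then show ?thesis by blast
qed



theorem lemma4p1:
  fixes N :: nat and f :: "nat \<Rightarrow> complex \<times> complex \<Rightarrow> complex"
    and g :: "complex \<times> complex \<Rightarrow> complex" and U :: "(complex \<times> complex) set"
  assumes N4: "N \<ge> 4"
    and U0: "(0, 0) \<in> U"
    and holo_f: "\<forall>j\<in>{1..N-1}. holo2 U (f j)"
    and holo_g: "holo2 U g"
    and maps: "\<forall>p\<in>U \<inter> Heis3. inHeis N (\<lambda>j. f j p) (g p)"
    and H0: "(\<forall>j\<in>{1..N-1}. f j (0, 0) = 0) \<and> g (0, 0) = 0"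
    and tdeg: "tang_degenerate N f (0, 0) 2 (N - 3)"
    and n10: "(\<forall>j\<in>{1..N-1}. pd 1 0 (f j) = (if j = 1 then 1 else 0)) \<and> pd 1 0 g = 0"
    and n01: "(\<forall>j\<in>{1..N-1}. pd 0 1 (f j) = 0) \<and> pd 0 1 g = 1"
    and n20: "(\<forall>j\<in>{1..N-1}. pd 2 0 (f j) = (if j = 2 then 2 else 0)) \<and> pd 2 0 g = 0"
    and n11: "pd 1 1 (f 2) = 0"
    and n02g: "Re (pd 0 2 g) = 0"
    and n21: "Re (pd 2 1 (f 2)) = 0"
    and n02f1: "Im (pd 0 2 (f 1)) = 0 \<and> Re (pd 0 2 (f 1)) \<ge> 0"
  shows "\<forall>k. 3 \<le> k \<and> k \<le> N - 1 \<longrightarrow>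
           (\<forall>\<^sub>F p in nhds (0, 0).
              (2 * (fst p)\<^sup>2 + (snd p)\<^sup>2 * pd 0 2 (f 2)) * f k p
              = snd p * (2 * fst p * pd 1 1 (f k) + snd p * pd 0 2 (f k)) * f 2 p)"
proof (intro allI impI)
  fix k :: nat assume k: "3 \<le> k \<and> k \<le> N - 1"
  have j2: "2 \<in> {1..N-1}" and jk: "k \<in> {1..N-1}" using N4 k by auto
  have k12: "k \<noteq> 1" "k \<noteq> 2" using k by auto
  have H2: "holo2 U (f 2)" and Hk: "holo2 U (f k)" using holo_f j2 jk by auto
  have oU: "open U" using holo_g by (simp add: holo2_def)
  obtain R where R: "R > 0" "ball (0, 0) R \<subseteq> U" using oU U0 open_contains_ball by blast
  obtain A where oA: "open A" and dA: "closure A = UNIV" and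
    gen: "\<And>z. z \<in> A \<Longrightarrow> Etl N f 2 (z, 0) (0, 0) = Et N f (z, 0) (0, 0)"
    using tdeg by (auto simp: tang_degenerate_def generic_on_Sq_def qbar_def)
  define a where "a = pd 0 2 (f 2)"
  define b where "b = pd 1 1 (f k)"
  define d where "d = pd 0 2 (f k)"
  define cc where "cc = (\<lambda>z j. (Dz (cnj (-2 * \<i> * z)) ^^ 2) (f j) (0, 0))"
  have pd_simps: "pd 1 0 F = dz F (0, 0)" "pd 0 1 F = dw F (0, 0)" "pd 2 0 F = dz (dz F) (0, 0)"
    "pd 1 1 F = dz (dw F) (0, 0)" "pd 0 2 F = dw (dw F) (0, 0)" for F
    by (simp_all add: pd_def numeral_2_eq_2)
  have n11': "dz (dw (f 2)) (0, 0) = 0" using n11 by (simp add: pd_def)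
  have cc2: "cc z 2 = 2 + (cnj (-2 * \<i> * z))^2 * a" for z
    using Dz2[OF H2 U0, of "cnj (-2 * \<i> * z)"] n20 n11' j2 by (simp add: cc_def a_def pd_simps)
  have cck: "cc z k = 2 * (cnj (-2 * \<i> * z)) * b + (cnj (-2 * \<i> * z))^2 * d" for z
    using Dz2[OF Hk U0, of "cnj (-2 * \<i> * z)"] n20 jk k12 by (simp add: cc_def b_def d_def pd_def numeral_2_eq_2)
  have coef: "(Dz (cnj (-2 * \<i> * z)) ^^ n) (f 2) (0, 0) * cc z k
             - (Dz (cnj (-2 * \<i> * z)) ^^ n) (f k) (0, 0) * cc z 2 = 0" if z: "z \<in> A" for z n
  proof -
    define \<zeta> where "\<zeta> = cnj (-2 * \<i> * z)"
    have "Lvec N f n (z, 0) (0, 0) \<in> Et N f (z, 0) (0, 0)"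
      unfolding Et_def by (rule module.span_base[OF module_cscale]) blast
    then have "Lvec N f n (z, 0) (0, 0) \<in> module.span cscale {Lvec N f k' (z, 0) (0, 0) | k'. k' \<le> 2}"
      using gen[OF z] by (simp add: Etl_def)
    from span3[OF this] obtain a0 a1 a2 where
      sp: "\<And>j. Lvec N f n (z, 0) (0, 0) j = a0 * Lvec N f 0 (z, 0) (0, 0) j
              + a1 * Lvec N f 1 (z, 0) (0, 0) j + a2 * Lvec N f 2 (z, 0) (0, 0) j" by blast
    have comp: "cnj ((Dz \<zeta> ^^ n) (f j) (0, 0)) = a2 * cnj (cc z j)"
      if jj: "j \<in> {1..N-1}" "j \<noteq> 1" for j
    proof -
      have Hj: "holo2 U (f j)" using holo_f jj by auto
      have L: "Lvec N f m (z, 0) (0, 0) j = cnj ((Dz \<zeta> ^^ m) (f j) (0, 0))" for m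
        using Lvec_comp[where f=f and j=j and U=U and N=N and m=m and z=z and w=0, OF Hj U0] jj by (simp add: \<zeta>_def)
      have "(Dz \<zeta> ^^ 1) (f j) (0, 0) = 0"
        using n10 n01 jj by (simp add: Dz_def pd_def)
      moreover have "(Dz \<zeta> ^^ 0) (f j) (0, 0) = 0" using H0 jj by simp
      ultimately show ?thesis using sp[of j] L[of n] L[of 0] L[of 1] L[of 2]
        by (simp add: cc_def \<zeta>_def)
    qed
    have "cnj ((Dz \<zeta> ^^ n) (f 2) (0, 0) * cc z k - (Dz \<zeta> ^^ n) (f k) (0, 0) * cc z 2) = 0"
      using comp[OF j2] comp[OF jk] k12 by (simp add: algebra_simps)
    then show ?thesis unfolding complex_cnj_zero_iff \<zeta>_def .
  qed
  have line: "cc z 2 * f k (t, cnj (-2 * \<i> * z) * t) - cc z k * f 2 (t, cnj (-2 * \<i> * z) * t) = 0"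
    if z: "z \<in> A" and t: "(t, cnj (-2 * \<i> * z) * t) \<in> ball (0, 0) R" for z t
  proof -
    define \<zeta> where "\<zeta> = cnj (-2 * \<i> * z)"
    define S where "S = {t. (t, \<zeta> * t) \<in> ball (0, 0) R}"
    define T where "T = {t. (t, \<zeta> * t) \<in> U}"
    have lin: "linear (\<lambda>t::complex. (t, \<zeta> * t))"
      by (intro bounded_linear.linear bounded_linear_Pair bounded_linear_ident bounded_linear_mult_right)
    have Seq: "S = (\<lambda>t. (t, \<zeta> * t)) -` ball (0, 0) R" by (auto simp: S_def)
    have cS: "convex S" using convex_linear_vimage[OF lin convex_ball] Seq by simp
    have cont: "continuous_on UNIV (\<lambda>t::complex. (t, \<zeta> * t))" by (intro continuous_intros)
    have oS: "open S"
      using open_vimage[OF open_ball cont] Seq by simp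
    have oT: "open T"
    proof -
      have "T = (\<lambda>t. (t, \<zeta> * t)) -` U" by (auto simp: T_def)
      then show ?thesis using open_vimage[OF oU cont] by simp
    qed
    have ST: "S \<subseteq> T" using R by (auto simp: S_def T_def)
    have 0: "0 \<in> S" "0 \<in> T" using R U0 by (auto simp: S_def T_def)
    have hk: "(\<lambda>t. f k (t, \<zeta> * t)) holomorphic_on T" and h2: "(\<lambda>t. f 2 (t, \<zeta> * t)) holomorphic_on T"
      using line_holo[OF Hk] line_holo[OF H2] by (auto simp: T_def)
    have hk': "(\<lambda>t. cc z 2 * f k (t, \<zeta> * t)) holomorphic_on T"
      and h2': "(\<lambda>t. cc z k * f 2 (t, \<zeta> * t)) holomorphic_on T"
      using hk h2 by (auto intro!: holomorphic_intros)
    have der: "(deriv ^^ n) (\<lambda>t. cc z 2 * f k (t, \<zeta> * t) - cc z k * f 2 (t, \<zeta> * t)) 0 = 0" for n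
    proof -
      have "(deriv ^^ n) (\<lambda>t. cc z 2 * f k (t, \<zeta> * t) - cc z k * f 2 (t, \<zeta> * t)) 0
          = (deriv ^^ n) (\<lambda>t. cc z 2 * f k (t, \<zeta> * t)) 0 - (deriv ^^ n) (\<lambda>t. cc z k * f 2 (t, \<zeta> * t)) 0"
        by (rule higher_deriv_diff[OF hk' h2' oT 0(2)])
      also have "\<dots> = cc z 2 * (deriv ^^ n) (\<lambda>t. f k (t, \<zeta> * t)) 0 - cc z k * (deriv ^^ n) (\<lambda>t. f 2 (t, \<zeta> * t)) 0"
        using higher_deriv_cmult[OF hk 0(2) oT] higher_deriv_cmult[OF h2 0(2) oT] by simp
      also have "\<dots> = cc z 2 * (Dz \<zeta> ^^ n) (f k) (0, 0) - cc z k * (Dz \<zeta> ^^ n) (f 2) (0, 0)"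
        using line_higher[OF Hk, of 0 \<zeta> n] line_higher[OF H2, of 0 \<zeta> n] U0 by simp
      also have "\<dots> = 0" using coef[OF z, of n] by (simp add: \<zeta>_def algebra_simps)
      finally show ?thesis .
    qed
    have "(\<lambda>t. cc z 2 * f k (t, \<zeta> * t) - cc z k * f 2 (t, \<zeta> * t)) t = 0"
    proof (rule holomorphic_fun_eq_0_on_connected[OF _ oS convex_connected[OF cS] der 0(1)])
      show "(\<lambda>t. cc z 2 * f k (t, \<zeta> * t) - cc z k * f 2 (t, \<zeta> * t)) holomorphic_on S"
        using holomorphic_on_subset[OF holomorphic_on_diff[OF hk' h2'] ST] .
      show "t \<in> S" using t by (simp add: S_def \<zeta>_def)
    qed
    then show ?thesis by (simp add: \<zeta>_def)
  qed
  define \<Phi> where "\<Phi> = (\<lambda>p. (2 * (fst p)\<^sup>2 + (snd p)\<^sup>2 * a) * f k p - snd p * (2 * fst p * b + snd p * d) * f 2 p)"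
  have \<Phi>line: "\<Phi> (t, cnj (-2 * \<i> * z) * t) = 0"
    if z: "z \<in> A" and t: "(t, cnj (-2 * \<i> * z) * t) \<in> ball (0, 0) R" for z t
  proof -
    have "\<Phi> (t, cnj (-2 * \<i> * z) * t) = t^2 * (cc z 2 * f k (t, cnj (-2 * \<i> * z) * t) - cc z k * f 2 (t, cnj (-2 * \<i> * z) * t))"
      unfolding \<Phi>_def cc2 cck by (simp add: algebra_simps power2_eq_square)
    then show ?thesis using line[OF z t] by simp
  qed
  have cPhi: "continuous_on U \<Phi>"
    using holo_f j2 jk unfolding \<Phi>_def holo2_def by (auto intro!: continuous_intros)
  have all0: "\<Phi> p = 0" if p: "p \<in> ball (0, 0) R" for p
  proof (rule ccontr)
    assume ne: "\<Phi> p \<noteq> 0"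
    define W where "W = ball (0, 0) R \<inter> \<Phi> -` (- {0})"
    have oW: "open W" unfolding W_def
      by (rule continuous_open_preimage[OF continuous_on_subset[OF cPhi R(2)] open_ball]) auto
    have pW: "p \<in> W" using p ne by (simp add: W_def)
    obtain e where e: "e > 0" "ball p e \<subseteq> W" using oW pW open_contains_ball by blast
    obtain z0 w0 where pz: "p = (z0, w0)" by (cases p)
    define z1 where "z1 = (if z0 = 0 then complex_of_real (e / 2) else z0)"
    have z1: "z1 \<noteq> 0" using e by (simp add: z1_def)
    have "dist (z0, w0) (z1, w0) < e" using e by (simp add: z1_def dist_Pair_Pair dist_norm)
    then have z1W: "(z1, w0) \<in> W" using e pz by auto
    define Z where "Z = (\<lambda>z. (z1, cnj (-2 * \<i> * z) * z1)) -` W"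
    have "continuous_on UNIV (\<lambda>z. (z1, cnj (-2 * \<i> * z) * z1))" by (intro continuous_intros)
    then have oZ: "open Z" unfolding Z_def using open_vimage[OF oW] by blast
    define zs where "zs = \<i> * cnj (w0 / z1) / 2"
    have "cnj (-2 * \<i> * zs) * z1 = w0" using z1 by (simp add: zs_def field_simps)
    then have "zs \<in> Z" using z1W by (simp add: Z_def)
    then have "Z \<inter> closure A \<noteq> {}" using dA by auto
    then have "Z \<inter> A \<noteq> {}" using open_Int_closure_eq_empty[OF oZ] by blast
    then obtain z where zA: "z \<in> A" and zZ: "z \<in> Z" by blast
    have inW: "(z1, cnj (-2 * \<i> * z) * z1) \<in> W" using zZ by (simp add: Z_def)
    then have "(z1, cnj (-2 * \<i> * z) * z1) \<in> ball (0, 0) R" by (simp add: W_def)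
    from \<Phi>line[OF zA this] inW show False by (simp add: W_def)
  qed
  have "\<forall>\<^sub>F p in nhds (0, 0). p \<in> ball (0, 0) R"
    by (rule eventually_nhds_in_open) (use R in auto)
  then have "\<forall>\<^sub>F p in nhds (0, 0). \<Phi> p = 0"
    by (rule eventually_mono) (rule all0)
  then show "\<forall>\<^sub>F p in nhds (0, 0).
              (2 * (fst p)\<^sup>2 + (snd p)\<^sup>2 * pd 0 2 (f 2)) * f k p
              = snd p * (2 * fst p * pd 1 1 (f k) + snd p * pd 0 2 (f k)) * f 2 p"
    by (rule eventually_mono) (simp add: \<Phi>_def a_def b_def d_def)
qed


end
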